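(* Let $\mathfrak n$ be a seven-dimensional two-step nilpotent real Lie algebra with an invariant scalar product $\langle\cdot,\cdot\rangle$ of index three. Then $\mathrm{ad}(\mathfrak n)$ is not contained in $\mathfrak g_{2(2)}$, where $\mathfrak g_{2(2)}$ is regarded as a subalgebra of $\mathfrak{so}(\mathfrak n,\langle\cdot,\cdot\rangle)\cong\mathfrak{so}_{4,3}$ (i.e. there is no three-form on $\mathfrak n$ of $\mathrm G_{2(2)}$-type compatible with $\langle\cdot,\cdot\rangle$ that is annihilated by $\mathrm{ad}(x)$ for all $x\in\mathfrak n$).
   Context: An invariant scalar product is a nondegenerate symmetric bilinear form satisfying $\langle[x,y],z\rangle=\langle x,[y,z]\rangle$; index three on a seven-dimensional space means signature $(4,3)$ or $(3,4)$. $\mathfrak{so}(\mathfrak n,\langle\cdot,\cdot\rangle)$ is the Lie algebra of endomorphisms skew-symmetric for $\langle\cdot,\cdot\rangle$. $\mathfrak g_{2(2)}$ is the Lie algebra of the split real form $\mathrm G_{2(2)}$ of $\mathrm G_2^{\mathbb C}$, which is the stabilizer subalgebra in $\mathfrak{so}_{4,3}$ of a certain (generic, split-type) three-form. A Lie algebra is two-step nilpotent if $[\mathfrak n,[\mathfrak n,\mathfrak n]]=0$ but $[\mathfrak n,\mathfrak n]\neq 0$. *)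

theory Defs
  imports "HOL-Analysis.Analysis"
begin

definition is_basis7 :: "(nat \<Rightarrow> 'a::real_vector) \<Rightarrow> bool" where
  "is_basis7 e \<longleftrightarrow> inj_on e {..<7} \<and> independent (e ` {..<7}) \<and> span (e ` {..<7}) = UNIV"

definition lie_bracket :: "('a::real_vector \<Rightarrow> 'a \<Rightarrow> 'a) \<Rightarrow> bool" where
  "lie_bracket br \<longleftrightarrow> bilinear br \<and> (\<forall>x. br x x = 0) \<and>
     (\<forall>x y z. br x (br y z) + br y (br z x) + br z (br x y) = 0)"

definition two_step_nilpotent :: "('a::real_vector \<Rightarrow> 'a \<Rightarrow> 'a) \<Rightarrow> bool" where
  "two_step_nilpotent br \<longleftrightarrow> (\<forall>x y z. br x (br y z) = 0) \<and> (\<exists>x y. br x y \<noteq> 0)"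

definition scalar_product :: "('a::real_vector \<Rightarrow> 'a \<Rightarrow> real) \<Rightarrow> bool" where
  "scalar_product B \<longleftrightarrow> bilinear B \<and> (\<forall>x y. B x y = B y x) \<and> (\<forall>x. (\<forall>y. B x y = 0) \<longrightarrow> x = 0)"

definition invariant_form :: "('a::real_vector \<Rightarrow> 'a \<Rightarrow> 'a) \<Rightarrow> ('a \<Rightarrow> 'a \<Rightarrow> real) \<Rightarrow> bool" where
  "invariant_form br B \<longleftrightarrow> (\<forall>x y z. B (br x y) z = B x (br y z))"

definition has_signature7 :: "('a::real_vector \<Rightarrow> 'a \<Rightarrow> real) \<Rightarrow> nat \<Rightarrow> nat \<Rightarrow> bool" where
  "has_signature7 B p q \<longleftrightarrow> p + q = 7 \<and> (\<exists>e. is_basis7 e \<and>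
     (\<forall>i<7. \<forall>j<7. i \<noteq> j \<longrightarrow> B (e i) (e j) = 0) \<and>
     (\<forall>i<7. B (e i) (e i) = 1 \<or> B (e i) (e i) = -1) \<and>
     card {i. i < 7 \<and> B (e i) (e i) = -1} = q)"

definition index_three :: "('a::real_vector \<Rightarrow> 'a \<Rightarrow> real) \<Rightarrow> bool" where
  "index_three B \<longleftrightarrow> has_signature7 B 4 3 \<or> has_signature7 B 3 4"

definition trilinear :: "('a::real_vector \<Rightarrow> 'a \<Rightarrow> 'a \<Rightarrow> real) \<Rightarrow> bool" where
  "trilinear \<phi> \<longleftrightarrow> (\<forall>b c. linear (\<lambda>a. \<phi> a b c)) \<and> (\<forall>a c. linear (\<lambda>b. \<phi> a b c))
      \<and> (\<forall>a b. linear (\<lambda>c. \<phi> a b c))"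

text \<open>Alternating extension of a single monomial e^{abc}.\<close>
definition alt3 :: "nat \<Rightarrow> nat \<Rightarrow> nat \<Rightarrow> nat \<Rightarrow> nat \<Rightarrow> nat \<Rightarrow> real" where
  "alt3 a b c i j k =
     (if (i,j,k) = (a,b,c) \<or> (i,j,k) = (b,c,a) \<or> (i,j,k) = (c,a,b) then 1
      else if (i,j,k) = (b,a,c) \<or> (i,j,k) = (a,c,b) \<or> (i,j,k) = (c,b,a) then -1 else 0)"

text \<open>Standard split G2 three-form (indices 0..6 for e1..e7):
  e123 - e145 - e167 - e246 + e257 + e347 + e356, whose stabiliser is g_2(2)
  and which induces the metric diag(1,1,1,-1,-1,-1,-1).\<close>
definition phi_split :: "nat \<Rightarrow> nat \<Rightarrow> nat \<Rightarrow> real" where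
  "phi_split i j k = alt3 0 1 2 i j k - alt3 0 3 4 i j k - alt3 0 5 6 i j k - alt3 1 3 5 i j k
      + alt3 1 4 6 i j k + alt3 2 3 6 i j k + alt3 2 4 5 i j k"

definition eta_split :: "nat \<Rightarrow> nat \<Rightarrow> real" where
  "eta_split i j = (if i = j then (if i < 3 then 1 else -1) else 0)"

definition g2_split_compatible :: "('a::real_vector \<Rightarrow> 'a \<Rightarrow> 'a \<Rightarrow> real) \<Rightarrow> ('a \<Rightarrow> 'a \<Rightarrow> real) \<Rightarrow> bool" where
  "g2_split_compatible \<phi> B \<longleftrightarrow> trilinear \<phi> \<and> (\<exists>e c. is_basis7 e \<and> c \<noteq> 0 \<and>
     (\<forall>i<7. \<forall>j<7. \<forall>k<7. \<phi> (e i) (e j) (e k) = phi_split i j k) \<and>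
     (\<forall>i<7. \<forall>j<7. B (e i) (e j) = c * eta_split i j))"

definition ad_invariant_form :: "('a::real_vector \<Rightarrow> 'a \<Rightarrow> 'a) \<Rightarrow> ('a \<Rightarrow> 'a \<Rightarrow> 'a \<Rightarrow> real) \<Rightarrow> bool" where
  "ad_invariant_form br \<phi> \<longleftrightarrow>
     (\<forall>x a b c. \<phi> (br x a) b c + \<phi> a (br x b) c + \<phi> a b (br x c) = 0)"

end

theory Submission
  imports Defs
begin

lemma L7: "{..<7::nat} = {0,1,2,3,4,5,6}"
  by (simp add: lessThan_nat_numeral lessThan_Suc insert_commute)

lemma all7: "(\<forall>i<(7::nat). P i) \<longleftrightarrow> P 0 \<and> P 1 \<and> P 2 \<and> P 3 \<and> P 4 \<and> P 5 \<and> P 6"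
  by (metis L7 lessThan_iff insert_iff empty_iff)

lemma basis_coeffs:
  assumes "is_basis7 e"
  shows "\<exists>u. v = (\<Sum>k<7. u k *\<^sub>R e k)"
proof -
  have sp: "span (e ` {..<7}) = UNIV" and inj: "inj_on e {..<7}"
    using assms by (auto simp: is_basis7_def)
  have "v \<in> range (\<lambda>u. \<Sum>w\<in>e ` {..<7}. u w *\<^sub>R w)"
    using sp span_finite[of "e ` {..<7}"] by auto
  then obtain u where "v = (\<Sum>w\<in>e ` {..<7}. u w *\<^sub>R w)" by auto
  also have "\<dots> = (\<Sum>k<7. u (e k) *\<^sub>R e k)"
    using inj by (simp add: sum.reindex)
  finally have v: "v = (\<Sum>k<7. u (e k) *\<^sub>R e k)" .
  show ?thesis by (rule exI[of _ "\<lambda>k. u (e k)"], rule v)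
qed

lemma tri1:
  assumes "trilinear \<phi>"
  shows "\<phi> (\<Sum>k\<in>S. s k *\<^sub>R w k) y z = (\<Sum>k\<in>S. s k * \<phi> (w k) y z)"
proof -
  have l: "linear (\<lambda>a. \<phi> a y z)" using assms by (simp add: trilinear_def)
  show ?thesis using linear_sum[OF l, of "\<lambda>k. s k *\<^sub>R w k" S] linear_scale[OF l] by simp
qed

lemma tri2:
  assumes "trilinear \<phi>"
  shows "\<phi> x (\<Sum>k\<in>S. s k *\<^sub>R w k) z = (\<Sum>k\<in>S. s k * \<phi> x (w k) z)"
proof -
  have l: "linear (\<lambda>a. \<phi> x a z)" using assms by (simp add: trilinear_def)
  show ?thesis using linear_sum[OF l, of "\<lambda>k. s k *\<^sub>R w k" S] linear_scale[OF l] by simp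
qed

lemma tri3:
  assumes "trilinear \<phi>"
  shows "\<phi> x y (\<Sum>k\<in>S. s k *\<^sub>R w k) = (\<Sum>k\<in>S. s k * \<phi> x y (w k))"
proof -
  have l: "linear (\<lambda>a. \<phi> x y a)" using assms by (simp add: trilinear_def)
  show ?thesis using linear_sum[OF l, of "\<lambda>k. s k *\<^sub>R w k" S] linear_scale[OF l] by simp
qed

theorem lemma3p8:
  fixes br :: "'a::euclidean_space \<Rightarrow> 'a \<Rightarrow> 'a"
    and B :: "'a \<Rightarrow> 'a \<Rightarrow> real"
  assumes "DIM('a) = 7"
    and "lie_bracket br"
    and "two_step_nilpotent br"
    and "scalar_product B"
    and "invariant_form br B"
    and "index_three B"
  shows "\<not> (\<exists>\<phi>. g2_split_compatible \<phi> B \<and> ad_invariant_form br \<phi>)"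
proof
  assume "\<exists>\<phi>. g2_split_compatible \<phi> B \<and> ad_invariant_form br \<phi>"
  then obtain \<phi> where g: "g2_split_compatible \<phi> B" and ad: "ad_invariant_form br \<phi>" by blast
  from g obtain e c where tri: "trilinear \<phi>" and bas: "is_basis7 e" and c0: "c \<noteq> 0"
    and phiv: "\<And>i j k. i<7 \<Longrightarrow> j<7 \<Longrightarrow> k<7 \<Longrightarrow> \<phi> (e i) (e j) (e k) = phi_split i j k"
    and Bv: "\<And>i j. i<7 \<Longrightarrow> j<7 \<Longrightarrow> B (e i) (e j) = c * eta_split i j"
    unfolding g2_split_compatible_def by blast
  have bl: "bilinear br" and xx: "\<And>x. br x x = 0"
    using assms(2) by (auto simp: lie_bracket_def)
  have Bb: "bilinear B" and Bs: "\<And>x y. B x y = B y x"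
    using assms(4) by (auto simp: scalar_product_def)
  have inv: "\<And>x y z. B (br x y) z = B x (br y z)"
    using assms(5) by (auto simp: invariant_form_def)
  have anti: "br x y = - br y x" for x y
  proof -
    have "0 = br (x + y) (x + y)" using xx by simp
    also have "\<dots> = br x y + br y x"
      unfolding bilinear_ladd[OF bl] bilinear_radd[OF bl] by (simp add: xx)
    finally have "br x y + br y x = 0" by simp
    then show ?thesis by (simp add: eq_neg_iff_add_eq_0)
  qed
  define V where "V i j k = B (br (e i) (e j)) (e k) / c" for i j k
  have Va: "V j i k = - V i j k" for i j k
    unfolding V_def using anti[of "e j" "e i"] bilinear_lneg[OF Bb] by simp
  have Vc: "V i j k = V j k i" for i j k
    unfolding V_def using inv Bs by metis
  have R1: "j < i \<Longrightarrow> V i j k = - V j i k" for i j k using Va[of j i k] by simp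
  have R2: "k < j \<Longrightarrow> V i j k = - V i k j" for i j k
    using Va Vc by metis
  have R3: "V i i k = 0" for i k using Va[of i i k] by simp
  have R4: "V i j j = 0" for i j using R3[of j i] Vc[of i j j] by simp
  note Vrules = R1 R2 R3 R4
  have expand: "v = (\<Sum>k<7. (eta_split k k * (B v (e k) / c)) *\<^sub>R e k)" for v
  proof -
    obtain u where u: "v = (\<Sum>k<7. u k *\<^sub>R e k)" using basis_coeffs[OF bas] by blast
    have "B v (e m) = u m * (c * eta_split m m)" if m: "m < 7" for m
    proof -
      have l: "linear (\<lambda>x. B x (e m))" using Bb by (simp add: bilinear_def)
      have "B v (e m) = (\<Sum>k<7. u k * B (e k) (e m))"
        using u linear_sum[OF l, of "\<lambda>k. u k *\<^sub>R e k" "{..<7}"] linear_scale[OF l] by simp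
      also have "\<dots> = (\<Sum>k<7. u k * (c * eta_split k m))"
        using Bv m by simp
      also have "\<dots> = u m * (c * eta_split m m)"
      proof -
        have "\<forall>m<7. (\<Sum>k<7. u k * (c * eta_split k m)) = u m * (c * eta_split m m)"
          unfolding all7 by (simp add: L7 eta_split_def)
        then show ?thesis using m by blast
      qed
      finally show ?thesis .
    qed
    then have cf: "\<And>m. m < 7 \<Longrightarrow> u m = eta_split m m * (B v (e m) / c)"
      using c0 by (auto simp: eta_split_def)
    note u
    also have "(\<Sum>k<7. u k *\<^sub>R e k) = (\<Sum>k<7. (eta_split k k * (B v (e k) / c)) *\<^sub>R e k)"
      by (rule sum.cong) (simp_all add: cf)
    finally show ?thesis .
  qed
  have brexp: "br (e i) (e j) = (\<Sum>k<7. (eta_split k k * V i j k) *\<^sub>R e k)" for i j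
    unfolding V_def by (rule expand)
  have E: "(\<Sum>m<7. (eta_split m m * V x a m) * phi_split m b d)
         + (\<Sum>m<7. (eta_split m m * V x b m) * phi_split a m d)
         + (\<Sum>m<7. (eta_split m m * V x d m) * phi_split a b m) = 0"
    if "x < 7" "a < 7" "b < 7" "d < 7" for x a b d
  proof -
    have "\<phi> (br (e x) (e a)) (e b) (e d) + \<phi> (e a) (br (e x) (e b)) (e d)
          + \<phi> (e a) (e b) (br (e x) (e d)) = 0"
      using ad by (simp add: ad_invariant_form_def)
    then show ?thesis
      unfolding brexp tri1[OF tri] tri2[OF tri] tri3[OF tri]
      using that phiv by simp
  qed
  note [simp] = L7 phi_split_def alt3_def eta_split_def
  note EQs = E[of 0 0 1 3, simplified] E[of 0 0 1 4, simplified] E[of 0 0 1 5, simplified] E[of 0 0 1 6, simplified] E[of 0 0 3 5, simplified] E[of 0 0 3 6, simplified] E[of 1 0 1 3, simplified] E[of 1 0 1 4, simplified] E[of 1 0 1 5, simplified] E[of 1 0 1 6, simplified] E[of 1 0 3 5, simplified] E[of 1 1 3 6, simplified] E[of 2 0 1 3, simplified] E[of 2 0 1 4, simplified] E[of 2 0 1 5, simplified] E[of 2 0 1 6, simplified] E[of 2 0 3 6, simplified] E[of 2 1 3 6, simplified] E[of 3 0 1 3, simplified] E[of 3 0 1 4, simplified] E[of 3 0 1 5, simplified] E[of 3 0 3 5, simplified] E[of 3 0 3 6, simplified] E[of 3 1 3 6, simplified] E[of 4 0 1 3, simplified] E[of 4 0 1 4, simplified] E[of 4 1 3 6, simplified]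 E[of 5 0 1 3, simplified] E[of 0 1 3 6, simplified] E[of 1 0 3 6, simplified] E[of 2 0 3 5, simplified] E[of 3 0 1 6, simplified] E[of 4 0 1 5, simplified] E[of 5 0 1 4, simplified] E[of 6 0 1 3, simplified]
  note [simp] = Vrules
  note EQs' = EQs[simplified]
  have z0: "V 0 (Suc 0) 2 = 0" using EQs' by linarith
  have z1: "V 0 (Suc 0) 3 = 0" using EQs' by linarith
  have z2: "V 0 (Suc 0) 4 = 0" using EQs' by linarith
  have z3: "V 0 (Suc 0) 5 = 0" using EQs' by linarith
  have z4: "V 0 (Suc 0) 6 = 0" using EQs' by linarith
  have z5: "V 0 2 3 = 0" using EQs' by linarith
  have z6: "V 0 2 4 = 0" using EQs' by linarith
  have z7: "V 0 2 5 = 0" using EQs' by linarith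
  have z8: "V 0 2 6 = 0" using EQs' by linarith
  have z9: "V 0 3 4 = 0" using EQs' by linarith
  have z10: "V 0 3 5 = 0" using EQs' by linarith
  have z11: "V 0 3 6 = 0" using EQs' by linarith
  have z12: "V 0 4 5 = 0" using EQs' by linarith
  have z13: "V 0 4 6 = 0" using EQs' by linarith
  have z14: "V 0 5 6 = 0" using EQs' by linarith
  have z15: "V (Suc 0) 2 3 = 0" using EQs' by linarith
  have z16: "V (Suc 0) 2 4 = 0" using EQs' by linarith
  have z17: "V (Suc 0) 2 5 = 0" using EQs' by linarith
  have z18: "V (Suc 0) 2 6 = 0" using EQs' by linarith
  have z19: "V (Suc 0) 3 4 = 0" using EQs' by linarith
  have z20: "V (Suc 0) 3 5 = 0" using EQs' by linarith
  have z21: "V (Suc 0) 3 6 = 0" using EQs' by linarith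
  have z22: "V (Suc 0) 4 5 = 0" using EQs' by linarith
  have z23: "V (Suc 0) 4 6 = 0" using EQs' by linarith
  have z24: "V (Suc 0) 5 6 = 0" using EQs' by linarith
  have z25: "V 2 3 4 = 0" using EQs' by linarith
  have z26: "V 2 3 5 = 0" using EQs' by linarith
  have z27: "V 2 3 6 = 0" using EQs' by linarith
  have z28: "V 2 4 5 = 0" using EQs' by linarith
  have z29: "V 2 4 6 = 0" using EQs' by linarith
  have z30: "V 2 5 6 = 0" using EQs' by linarith
  have z31: "V 3 4 5 = 0" using EQs' by linarith
  have z32: "V 3 4 6 = 0" using EQs' by linarith
  have z33: "V 3 5 6 = 0" using EQs' by linarith
  have z34: "V 4 5 6 = 0" using EQs' by linarith
  note Z = z0 z1 z2 z3 z4 z5 z6 z7 z8 z9 z10 z11 z12 z13 z14 z15 z16 z17 z18 z19 z20 z21 z22 z23 z24 z25 z26 z27 z28 z29 z30 z31 z32 z33 z34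
  have allV: "\<forall>i<7. \<forall>j<7. \<forall>k<7. V i j k = 0"
    unfolding all7 by (simp add: Z)
  have bre: "br (e i) (e j) = 0" if "i < 7" "j < 7" for i j
    using that allV unfolding brexp by simp
  have "br x y = 0" for x y
  proof -
    obtain u where u: "x = (\<Sum>k<7. u k *\<^sub>R e k)" using basis_coeffs[OF bas] by blast
    obtain w where w: "y = (\<Sum>k<7. w k *\<^sub>R e k)" using basis_coeffs[OF bas] by blast
    show ?thesis unfolding u w bilinear_sum[OF bl]
      by (intro sum.neutral) (auto simp: bilinear_lmul[OF bl] bilinear_rmul[OF bl] bre)
  qed
  then show False using assms(3) by (simp add: two_step_nilpotent_def)
qed

end
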